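(* Let $A,B$ be non-empty sets, $I$ a non-empty index set, $\{V_i\}_{i\in I}\subseteq\mathcal R(A)$, $\{W_i\}_{i\in I}\subseteq\mathcal R(B)$, $Z\in\mathcal R(A,B)$. For each $t\in\{1,\dots,6\}$, the system $WL^{2\text{-}t}(A,B,I,V_i,W_i,Z)$ has a greatest solution (possibly the empty relation, i.e. constantly $0$). If moreover $Z$ is a partial fuzzy function, then the greatest solutions to $WL^{2\text{-}3}(A,B,I,V_i,W_i,Z)$ and $WL^{2\text{-}4}(A,B,I,V_i,W_i,Z)$ are partial fuzzy functions.
   Context: $\mathcal L=(L,\wedge,\vee,\otimes,\to,0,1)$ is a complete residuated lattice; $x\leftrightarrow y=(x\to y)\wedge(y\to x)$. For non-empty sets $X,Y$, $\mathcal R(X,Y)$ is the set of fuzzy relations $X\times Y\to L$, $\mathcal R(X)=\mathcal R(X,X)$, ordered pointwise; $R^{-1}(y,x)=R(x,y)$; $(R\circ S)(x,t)=\bigvee_{y}R(x,y)\otimes S(y,t)$. Heterogeneous systems with unknown $U\in\mathcal R(A,B)$: $WL^{2\text{-}1}$: $U^{-1}\circ V_i\le W_i\circ U^{-1}$ ($i\in I$), $U\le Z$; $WL^{2\text{-}2}$: $V_i\circ U\le U\circ W_i$ ($i\in I$), $U\le Z$; $WL^{2\text{-}3}$: $U^{-1}\circ V_i\le W_i\circ U^{-1}$ and $U\circ W_i\le V_i\circ U$ ($i\in I$), $U\le Z$; $WL^{2\text{-}4}$: $V_i\circ U\le U\circ W_i$ and $W_i\circ U^{-1}\le U^{-1}\circ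 V_i$ ($i\in I$), $U\le Z$; $WL^{2\text{-}5}$: $V_i\circ U=U\circ W_i$ ($i\in I$), $U\le Z$; $WL^{2\text{-}6}$: $U^{-1}\circ V_i=W_i\circ U^{-1}$ ($i\in I$), $U\le Z$. For $R\in\mathcal R(A,B)$, its kernel is $E_A^R(a_1,a_2)=\bigwedge_{b\in B}R(a_1,b)\leftrightarrow R(a_2,b)$ and co-kernel $E_B^R(b_1,b_2)=\bigwedge_{a\in A}R(a,b_1)\leftrightarrow R(a,b_2)$. $R$ is a partial fuzzy function if $R(a,b_1)\otimes R(a,b_2)\le E_B^R(b_1,b_2)$ for all $a\in A$, $b_1,b_2\in B$ (equivalently, as is known, $R\circ R^{-1}\circ R\le R$). *)

theory Defs
  imports Main
begin

text \<open>Complete residuated lattice: the carrier is a type of class complete_lattice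
  (so meet, join, 0 = bot, 1 = top and infinite meets/joins are given), together with
  a multiplication m (the tensor) and a residuum r (the arrow).\<close>

definition complete_residuated_lattice ::
  "('l::complete_lattice \<Rightarrow> 'l \<Rightarrow> 'l) \<Rightarrow> ('l \<Rightarrow> 'l \<Rightarrow> 'l) \<Rightarrow> bool" where
  "complete_residuated_lattice m r \<longleftrightarrow>
     (\<forall>x y z. m (m x y) z = m x (m y z)) \<and>
     (\<forall>x y. m x y = m y x) \<and>
     (\<forall>x. m x top = x) \<and>
     (\<forall>x y z. m x y \<le> z \<longleftrightarrow> x \<le> r y z)"

definition biimp :: "('l::complete_lattice \<Rightarrow> 'l \<Rightarrow> 'l) \<Rightarrow> 'l \<Rightarrow> 'l \<Rightarrow> 'l" where
  "biimp r x y = inf (r x y) (r y x)"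

text \<open>Fuzzy relations X \<times> Y \<rightarrow> L are functions 'x \<Rightarrow> 'y \<Rightarrow> 'l, ordered pointwise
  (the library's order on functions).\<close>

definition conv :: "('a \<Rightarrow> 'b \<Rightarrow> 'l) \<Rightarrow> 'b \<Rightarrow> 'a \<Rightarrow> 'l" where
  "conv R y x = R x y"

definition rcomp :: "('l::complete_lattice \<Rightarrow> 'l \<Rightarrow> 'l) \<Rightarrow>
    ('a \<Rightarrow> 'b \<Rightarrow> 'l) \<Rightarrow> ('b \<Rightarrow> 'c \<Rightarrow> 'l) \<Rightarrow> 'a \<Rightarrow> 'c \<Rightarrow> 'l" where
  "rcomp m R S x t = (SUP y. m (R x y) (S y t))"

definition kernel :: "('l::complete_lattice \<Rightarrow> 'l \<Rightarrow> 'l) \<Rightarrow> ('a \<Rightarrow> 'b \<Rightarrow> 'l) \<Rightarrow> 'a \<Rightarrow> 'a \<Rightarrow> 'l" where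
  "kernel r R a1 a2 = (INF b. biimp r (R a1 b) (R a2 b))"

definition cokernel :: "('l::complete_lattice \<Rightarrow> 'l \<Rightarrow> 'l) \<Rightarrow> ('a \<Rightarrow> 'b \<Rightarrow> 'l) \<Rightarrow> 'b \<Rightarrow> 'b \<Rightarrow> 'l" where
  "cokernel r R b1 b2 = (INF a. biimp r (R a b1) (R a b2))"

definition partial_fuzzy_function ::
  "('l::complete_lattice \<Rightarrow> 'l \<Rightarrow> 'l) \<Rightarrow> ('l \<Rightarrow> 'l \<Rightarrow> 'l) \<Rightarrow> ('a \<Rightarrow> 'b \<Rightarrow> 'l) \<Rightarrow> bool" where
  "partial_fuzzy_function m r R \<longleftrightarrow>
     (\<forall>a b1 b2. m (R a b1) (R a b2) \<le> cokernel r R b1 b2)"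

definition WL21 where
  "WL21 m I V W Z U \<longleftrightarrow>
     (\<forall>i\<in>I. rcomp m (conv U) (V i) \<le> rcomp m (W i) (conv U)) \<and> U \<le> Z"

definition WL22 where
  "WL22 m I V W Z U \<longleftrightarrow>
     (\<forall>i\<in>I. rcomp m (V i) U \<le> rcomp m U (W i)) \<and> U \<le> Z"

definition WL23 where
  "WL23 m I V W Z U \<longleftrightarrow>
     (\<forall>i\<in>I. rcomp m (conv U) (V i) \<le> rcomp m (W i) (conv U) \<and>
             rcomp m U (W i) \<le> rcomp m (V i) U) \<and> U \<le> Z"

definition WL24 where
  "WL24 m I V W Z U \<longleftrightarrow>
     (\<forall>i\<in>I. rcomp m (V i) U \<le> rcomp m U (W i) \<and>
             rcomp m (W i) (conv U) \<le> rcomp m (conv U) (V i)) \<and> U \<le> Z"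

definition WL25 where
  "WL25 m I V W Z U \<longleftrightarrow>
     (\<forall>i\<in>I. rcomp m (V i) U = rcomp m U (W i)) \<and> U \<le> Z"

definition WL26 where
  "WL26 m I V W Z U \<longleftrightarrow>
     (\<forall>i\<in>I. rcomp m (conv U) (V i) = rcomp m (W i) (conv U)) \<and> U \<le> Z"

definition greatest_solution :: "(('a \<Rightarrow> 'b \<Rightarrow> 'l::complete_lattice) \<Rightarrow> bool) \<Rightarrow> ('a \<Rightarrow> 'b \<Rightarrow> 'l) \<Rightarrow> bool" where
  "greatest_solution P U \<longleftrightarrow> P U \<and> (\<forall>U'. P U' \<longrightarrow> U' \<le> U)"

end

theory Submission
  imports Defs
begin

lemma gs_exists:
  assumes "\<And>\<U>. \<forall>U\<in>\<U>. P U \<Longrightarrow> P (Sup \<U>)"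
  shows "\<exists>U. greatest_solution P U"
  by (rule exI[of _ "Sup {U. P U}"]) (auto simp: greatest_solution_def intro: assms Sup_upper)

lemma conv_conv[simp]: "conv (conv R) = R"
  by (rule ext, rule ext) (simp add: conv_def)

lemma conv_mono: "R \<le> S \<Longrightarrow> conv R \<le> conv S"
  by (simp add: le_fun_def conv_def)

lemma conv_Sup: "conv (Sup \<U>) = (SUP U\<in>\<U>. conv U)"
  by (rule ext, rule ext) (simp add: conv_def image_image)

locale crl =
  fixes m r :: "'l::complete_lattice \<Rightarrow> 'l \<Rightarrow> 'l"
  assumes crl: "complete_residuated_lattice m r"
begin

lemma assoc: "m (m x y) z = m x (m y z)"
  using crl unfolding complete_residuated_lattice_def by blast
lemma comm: "m x y = m y x"
  using crl unfolding complete_residuated_lattice_def by blast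
lemma res: "m x y \<le> z \<longleftrightarrow> x \<le> r y z"
  using crl unfolding complete_residuated_lattice_def by blast
lemma res2: "m x y \<le> z \<longleftrightarrow> y \<le> r x z"
  using res comm by metis
lemma mono2: "y \<le> y' \<Longrightarrow> m x y \<le> m x y'"
  by (metis res2 order_refl order_trans)
lemma mono1: "x \<le> x' \<Longrightarrow> m x y \<le> m x' y"
  using mono2 comm by metis
lemma monom: "x \<le> x' \<Longrightarrow> y \<le> y' \<Longrightarrow> m x y \<le> m x' y'"
  by (meson mono1 mono2 order_trans)

lemma Sup_right: "m x (SUP s\<in>S. f s) = (SUP s\<in>S. m x (f s))"
proof (rule antisym)
  show "m x (SUP s\<in>S. f s) \<le> (SUP s\<in>S. m x (f s))"
    unfolding res2 by (rule SUP_least) (metis res2 SUP_upper)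
  show "(SUP s\<in>S. m x (f s)) \<le> m x (SUP s\<in>S. f s)"
    by (rule SUP_least, rule mono2, rule SUP_upper)
qed

lemma Sup_left: "m (SUP s\<in>S. f s) y = (SUP s\<in>S. m (f s) y)"
  by (simp only: comm[of _ y] Sup_right)

lemma rcomp_mono: "R \<le> R' \<Longrightarrow> S \<le> S' \<Longrightarrow> rcomp m R S \<le> rcomp m R' S'"
  unfolding le_fun_def rcomp_def by (auto intro!: SUP_mono' monom)

lemma rcomp_assoc: "rcomp m (rcomp m R S) T = rcomp m R (rcomp m S T)"
proof (rule ext, rule ext)
  fix x t
  have "rcomp m (rcomp m R S) T x t = (SUP z. SUP y. m (m (R x y) (S y z)) (T z t))"
    by (simp add: rcomp_def Sup_left)
  also have "\<dots> = (SUP y. SUP z. m (R x y) (m (S y z) (T z t)))"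
    by (simp only: assoc, rule SUP_commute)
  also have "\<dots> = rcomp m R (rcomp m S T) x t"
    by (simp add: rcomp_def Sup_right)
  finally show "rcomp m (rcomp m R S) T x t = rcomp m R (rcomp m S T) x t" .
qed

lemma conv_rcomp: "conv (rcomp m R S) = rcomp m (conv S) (conv R)"
  by (rule ext, rule ext) (simp add: conv_def rcomp_def comm)

lemma rcomp_SupL: "rcomp m (Sup \<U>) S = (SUP U\<in>\<U>. rcomp m U S)"
proof (rule ext, rule ext)
  fix x t
  show "rcomp m (Sup \<U>) S x t = (SUP U\<in>\<U>. rcomp m U S) x t"
    unfolding rcomp_def by (simp add: Sup_left image_image, rule SUP_commute)
qed

lemma rcomp_SupR: "rcomp m R (Sup \<U>) = (SUP U\<in>\<U>. rcomp m R U)"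
proof (rule ext, rule ext)
  fix x t
  show "rcomp m R (Sup \<U>) x t = (SUP U\<in>\<U>. rcomp m R U) x t"
    unfolding rcomp_def by (simp add: Sup_right image_image, rule SUP_commute)
qed


lemma rcomp_Sup_le1: "U \<in> \<U> \<Longrightarrow> rcomp m X U \<le> rcomp m X (Sup \<U>)"
  by (rule rcomp_mono) (auto intro: Sup_upper)
lemma rcomp_Sup_le2: "U \<in> \<U> \<Longrightarrow> rcomp m U X \<le> rcomp m (Sup \<U>) X"
  by (rule rcomp_mono) (auto intro: Sup_upper)
lemma rcomp_Sup_le3: "U \<in> \<U> \<Longrightarrow> rcomp m X (conv U) \<le> rcomp m X (conv (Sup \<U>))"
  by (rule rcomp_mono) (auto intro: Sup_upper conv_mono)
lemma rcomp_Sup_le4: "U \<in> \<U> \<Longrightarrow> rcomp m (conv U) X \<le> rcomp m (conv (Sup \<U>)) X"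
  by (rule rcomp_mono) (auto intro: Sup_upper conv_mono)

lemma le_closed:
  fixes F G :: "'x::complete_lattice \<Rightarrow> 'y::complete_lattice"
  assumes "\<forall>U\<in>\<U>. F U \<le> G U" "F (Sup \<U>) = (SUP U\<in>\<U>. F U)" "\<And>U. U\<in>\<U> \<Longrightarrow> G U \<le> G (Sup \<U>)"
  shows "F (Sup \<U>) \<le> G (Sup \<U>)"
  unfolding assms(2)
proof (rule SUP_least)
  fix U assume "U \<in> \<U>"
  then show "F U \<le> G (Sup \<U>)" using assms(1,3) order_trans by blast
qed

lemma eq_closed:
  fixes F G :: "'x::complete_lattice \<Rightarrow> 'y::complete_lattice"
  assumes "\<forall>U\<in>\<U>. F U = G U" "F (Sup \<U>) = (SUP U\<in>\<U>. F U)" "G (Sup \<U>) = (SUP U\<in>\<U>. G U)"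
  shows "F (Sup \<U>) = G (Sup \<U>)"
  unfolding assms(2,3) using assms(1) by (auto intro: SUP_cong)

lemma dL: "rcomp m (conv (Sup \<U>)) X = (SUP U\<in>\<U>. rcomp m (conv U) X)"
  by (simp add: conv_Sup rcomp_SupL image_image)
lemma dR: "rcomp m X (conv (Sup \<U>)) = (SUP U\<in>\<U>. rcomp m X (conv U))"
  by (simp add: conv_Sup rcomp_SupR image_image)

lemma Z_closed: fixes Z :: "'x::complete_lattice" shows "\<forall>U\<in>\<U>. U \<le> Z \<Longrightarrow> Sup \<U> \<le> Z"
  by (auto intro: Sup_least)

lemma c21: "\<forall>U\<in>\<U>. WL21 m I V W Z U \<Longrightarrow> WL21 m I V W Z (Sup \<U>)"
  unfolding WL21_def
proof (intro conjI ballI)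
  fix i assume h: "\<forall>U\<in>\<U>. (\<forall>i\<in>I. rcomp m (conv U) (V i) \<le> rcomp m (W i) (conv U)) \<and> U \<le> Z" and i: "i \<in> I"
  show "rcomp m (conv (Sup \<U>)) (V i) \<le> rcomp m (W i) (conv (Sup \<U>))"
    by (rule le_closed[where F="\<lambda>U. rcomp m (conv U) (V i)" and G="\<lambda>U. rcomp m (W i) (conv U)"])
       (use h i in \<open>auto intro: dL rcomp_Sup_le3\<close>)
qed (auto intro: Z_closed)

lemma c22: "\<forall>U\<in>\<U>. WL22 m I V W Z U \<Longrightarrow> WL22 m I V W Z (Sup \<U>)"
  unfolding WL22_def
proof (intro conjI ballI)
  fix i assume h: "\<forall>U\<in>\<U>. (\<forall>i\<in>I. rcomp m (V i) U \<le> rcomp m U (W i)) \<and> U \<le> Z" and i: "i \<in> I"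
  show "rcomp m (V i) (Sup \<U>) \<le> rcomp m (Sup \<U>) (W i)"
    by (rule le_closed[where F="\<lambda>U. rcomp m (V i) U" and G="\<lambda>U. rcomp m U (W i)"])
       (use h i in \<open>auto intro: rcomp_SupR rcomp_Sup_le2\<close>)
qed (auto intro: Z_closed)

lemma c23: "\<forall>U\<in>\<U>. WL23 m I V W Z U \<Longrightarrow> WL23 m I V W Z (Sup \<U>)"
  unfolding WL23_def
proof (intro conjI ballI)
  fix i assume h: "\<forall>U\<in>\<U>. (\<forall>i\<in>I. rcomp m (conv U) (V i) \<le> rcomp m (W i) (conv U) \<and> rcomp m U (W i) \<le> rcomp m (V i) U) \<and> U \<le> Z" and i: "i \<in> I"
  show "rcomp m (conv (Sup \<U>)) (V i) \<le> rcomp m (W i) (conv (Sup \<U>))"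
    by (rule le_closed[where F="\<lambda>U. rcomp m (conv U) (V i)" and G="\<lambda>U. rcomp m (W i) (conv U)"])
       (use h i in \<open>auto intro: dL rcomp_Sup_le3\<close>)
  show "rcomp m (Sup \<U>) (W i) \<le> rcomp m (V i) (Sup \<U>)"
    by (rule le_closed[where F="\<lambda>U. rcomp m U (W i)" and G="\<lambda>U. rcomp m (V i) U"])
       (use h i in \<open>auto intro: rcomp_SupL rcomp_Sup_le1\<close>)
qed (auto intro: Z_closed)

lemma c24: "\<forall>U\<in>\<U>. WL24 m I V W Z U \<Longrightarrow> WL24 m I V W Z (Sup \<U>)"
  unfolding WL24_def
proof (intro conjI ballI)
  fix i assume h: "\<forall>U\<in>\<U>. (\<forall>i\<in>I. rcomp m (V i) U \<le> rcomp m U (W i) \<and> rcomp m (W i) (conv U) \<le> rcomp m (conv U) (V i)) \<and> U \<le> Z" and i: "i \<in> I"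
  show "rcomp m (V i) (Sup \<U>) \<le> rcomp m (Sup \<U>) (W i)"
    by (rule le_closed[where F="\<lambda>U. rcomp m (V i) U" and G="\<lambda>U. rcomp m U (W i)"])
       (use h i in \<open>auto intro: rcomp_SupR rcomp_Sup_le2\<close>)
  show "rcomp m (W i) (conv (Sup \<U>)) \<le> rcomp m (conv (Sup \<U>)) (V i)"
    by (rule le_closed[where F="\<lambda>U. rcomp m (W i) (conv U)" and G="\<lambda>U. rcomp m (conv U) (V i)"])
       (use h i in \<open>auto intro: dR rcomp_Sup_le4\<close>)
qed (auto intro: Z_closed)

lemma c25: "\<forall>U\<in>\<U>. WL25 m I V W Z U \<Longrightarrow> WL25 m I V W Z (Sup \<U>)"
  unfolding WL25_def
proof (intro conjI ballI)
  fix i assume h: "\<forall>U\<in>\<U>. (\<forall>i\<in>I. rcomp m (V i) U = rcomp m U (W i)) \<and> U \<le> Z" and i: "i \<in> I"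
  show "rcomp m (V i) (Sup \<U>) = rcomp m (Sup \<U>) (W i)"
    by (rule eq_closed[where F="\<lambda>U. rcomp m (V i) U" and G="\<lambda>U. rcomp m U (W i)"])
       (use h i in \<open>simp_all add: rcomp_SupR rcomp_SupL\<close>)
qed (auto intro: Z_closed)

lemma c26: "\<forall>U\<in>\<U>. WL26 m I V W Z U \<Longrightarrow> WL26 m I V W Z (Sup \<U>)"
  unfolding WL26_def
proof (intro conjI ballI)
  fix i assume h: "\<forall>U\<in>\<U>. (\<forall>i\<in>I. rcomp m (conv U) (V i) = rcomp m (W i) (conv U)) \<and> U \<le> Z" and i: "i \<in> I"
  show "rcomp m (conv (Sup \<U>)) (V i) = rcomp m (W i) (conv (Sup \<U>))"
    by (rule eq_closed[where F="\<lambda>U. rcomp m (conv U) (V i)" and G="\<lambda>U. rcomp m (W i) (conv U)"])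
       (use h i in \<open>simp_all add: dL dR\<close>)
qed (auto intro: Z_closed)

lemma triple: "rcomp m (rcomp m R (conv R)) R \<le> R \<longleftrightarrow>
   (\<forall>x y z t. m (m (R x z) (R y z)) (R y t) \<le> R x t)"
proof -
  have "\<And>x t. rcomp m (rcomp m R (conv R)) R x t = (SUP y. SUP z. m (m (R x z) (R y z)) (R y t))"
    by (simp add: rcomp_def conv_def Sup_left)
  then show ?thesis by (simp add: le_fun_def SUP_le_iff) blast
qed

lemma ac1: "m (m p q) s = m (m s p) q"
  by (metis assoc comm)

lemma pff_iff: "partial_fuzzy_function m r R \<longleftrightarrow> rcomp m (rcomp m R (conv R)) R \<le> R"
proof -
  have "partial_fuzzy_function m r R \<longleftrightarrow>
    (\<forall>a b1 b2 a'. m (m (R a b1) (R a b2)) (R a' b1) \<le> R a' b2 \<and>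
                  m (m (R a b1) (R a b2)) (R a' b2) \<le> R a' b1)"
    by (simp add: partial_fuzzy_function_def cokernel_def biimp_def le_INF_iff res)
  also have "\<dots> \<longleftrightarrow> (\<forall>x y z t. m (m (R x z) (R y z)) (R y t) \<le> R x t)"
    by (metis ac1 comm)
  finally show ?thesis using triple[of R] by blast
qed


lemma T_le_Z:
  assumes "U \<le> Z" "partial_fuzzy_function m r Z"
  shows "rcomp m (rcomp m U (conv U)) U \<le> Z"
proof -
  have "rcomp m (rcomp m U (conv U)) U \<le> rcomp m (rcomp m Z (conv Z)) Z"
    using assms(1) by (intro rcomp_mono conv_mono) auto
  also have "\<dots> \<le> Z" using assms(2) pff_iff by blast
  finally show ?thesis .
qed

lemma convT: "conv (rcomp m (rcomp m U (conv U)) U) = rcomp m (conv U) (rcomp m U (conv U))"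
  by (simp add: conv_rcomp rcomp_assoc)

lemma T23:
  assumes "WL23 m I V W Z U" "partial_fuzzy_function m r Z"
  shows "WL23 m I V W Z (rcomp m (rcomp m U (conv U)) U)"
  unfolding WL23_def
proof (intro conjI ballI)
  let ?c = "rcomp m" and ?U' = "conv U"
  fix i assume i: "i \<in> I"
  have h1: "?c ?U' (V i) \<le> ?c (W i) ?U'" and h2: "?c U (W i) \<le> ?c (V i) U"
    using assms(1) i unfolding WL23_def by auto
  have "?c (conv (?c (?c U ?U') U)) (V i) = ?c ?U' (?c U (?c ?U' (V i)))"
    by (simp add: conv_rcomp rcomp_assoc)
  also have "\<dots> \<le> ?c ?U' (?c U (?c (W i) ?U'))"
    by (intro rcomp_mono order_refl h1)
  also have "\<dots> = ?c ?U' (?c (?c U (W i)) ?U')" by (simp add: rcomp_assoc)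
  also have "\<dots> \<le> ?c ?U' (?c (?c (V i) U) ?U')"
    by (intro rcomp_mono order_refl h2)
  also have "\<dots> = ?c (?c ?U' (V i)) (?c U ?U')" by (simp add: rcomp_assoc)
  also have "\<dots> \<le> ?c (?c (W i) ?U') (?c U ?U')"
    by (intro rcomp_mono order_refl h1)
  also have "\<dots> = ?c (W i) (conv (?c (?c U ?U') U))" by (simp add: conv_rcomp rcomp_assoc)
  finally show "?c (conv (?c (?c U ?U') U)) (V i) \<le> ?c (W i) (conv (?c (?c U ?U') U))" .
  have "?c (?c (?c U ?U') U) (W i) = ?c U (?c ?U' (?c U (W i)))"
    by (simp add: rcomp_assoc)
  also have "\<dots> \<le> ?c U (?c ?U' (?c (V i) U))"
    by (intro rcomp_mono order_refl h2)
  also have "\<dots> = ?c U (?c (?c ?U' (V i)) U)" by (simp add: rcomp_assoc)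
  also have "\<dots> \<le> ?c U (?c (?c (W i) ?U') U)"
    by (intro rcomp_mono order_refl h1)
  also have "\<dots> = ?c (?c U (W i)) (?c ?U' U)" by (simp add: rcomp_assoc)
  also have "\<dots> \<le> ?c (?c (V i) U) (?c ?U' U)"
    by (intro rcomp_mono order_refl h2)
  also have "\<dots> = ?c (V i) (?c (?c U ?U') U)" by (simp add: rcomp_assoc)
  finally show "?c (?c (?c U ?U') U) (W i) \<le> ?c (V i) (?c (?c U ?U') U)" .
next
  show "rcomp m (rcomp m U (conv U)) U \<le> Z"
    using assms T_le_Z unfolding WL23_def by blast
qed

lemma T24:
  assumes "WL24 m I V W Z U" "partial_fuzzy_function m r Z"
  shows "WL24 m I V W Z (rcomp m (rcomp m U (conv U)) U)"
  unfolding WL24_def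
proof (intro conjI ballI)
  let ?c = "rcomp m" and ?U' = "conv U"
  fix i assume i: "i \<in> I"
  have h1: "?c (V i) U \<le> ?c U (W i)" and h2: "?c (W i) ?U' \<le> ?c ?U' (V i)"
    using assms(1) i unfolding WL24_def by auto
  have "?c (V i) (?c (?c U ?U') U) = ?c (?c (V i) U) (?c ?U' U)"
    by (simp add: rcomp_assoc)
  also have "\<dots> \<le> ?c (?c U (W i)) (?c ?U' U)"
    by (intro rcomp_mono order_refl h1)
  also have "\<dots> = ?c U (?c (?c (W i) ?U') U)" by (simp add: rcomp_assoc)
  also have "\<dots> \<le> ?c U (?c (?c ?U' (V i)) U)"
    by (intro rcomp_mono order_refl h2)
  also have "\<dots> = ?c U (?c ?U' (?c (V i) U))" by (simp add: rcomp_assoc)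
  also have "\<dots> \<le> ?c U (?c ?U' (?c U (W i)))"
    by (intro rcomp_mono order_refl h1)
  also have "\<dots> = ?c (?c (?c U ?U') U) (W i)" by (simp add: rcomp_assoc)
  finally show "?c (V i) (?c (?c U ?U') U) \<le> ?c (?c (?c U ?U') U) (W i)" .
  have "?c (W i) (conv (?c (?c U ?U') U)) = ?c (?c (W i) ?U') (?c U ?U')"
    by (simp add: conv_rcomp rcomp_assoc)
  also have "\<dots> \<le> ?c (?c ?U' (V i)) (?c U ?U')"
    by (intro rcomp_mono order_refl h2)
  also have "\<dots> = ?c ?U' (?c (?c (V i) U) ?U')" by (simp add: rcomp_assoc)
  also have "\<dots> \<le> ?c ?U' (?c (?c U (W i)) ?U')"
    by (intro rcomp_mono order_refl h1)
  also have "\<dots> = ?c ?U' (?c U (?c (W i) ?U'))" by (simp add: rcomp_assoc)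
  also have "\<dots> \<le> ?c ?U' (?c U (?c ?U' (V i)))"
    by (intro rcomp_mono order_refl h2)
  also have "\<dots> = ?c (conv (?c (?c U ?U') U)) (V i)" by (simp add: conv_rcomp rcomp_assoc)
  finally show "?c (W i) (conv (?c (?c U ?U') U)) \<le> ?c (conv (?c (?c U ?U') U)) (V i)" .
next
  show "rcomp m (rcomp m U (conv U)) U \<le> Z"
    using assms T_le_Z unfolding WL24_def by blast
qed

lemma gs_pff:
  assumes cl: "\<And>\<U>. \<forall>U\<in>\<U>. P U \<Longrightarrow> P (Sup \<U>)"
    and gs: "greatest_solution P U"
    and PT: "P (rcomp m (rcomp m U (conv U)) U)"
  shows "partial_fuzzy_function m r U"
proof -
  let ?T = "rcomp m (rcomp m U (conv U)) U"
  have "P (Sup {U, ?T})" using gs PT by (intro cl) (auto simp: greatest_solution_def)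
  then have "Sup {U, ?T} \<le> U" using gs by (auto simp: greatest_solution_def)
  then have "?T \<le> U" by (meson Sup_upper insertCI order_trans)
  then show ?thesis using pff_iff by blast
qed

end

theorem theorem4p4:
  fixes m r :: "'l::complete_lattice \<Rightarrow> 'l \<Rightarrow> 'l"
    and I :: "'i set"
    and V :: "'i \<Rightarrow> 'a \<Rightarrow> 'a \<Rightarrow> 'l"
    and W :: "'i \<Rightarrow> 'b \<Rightarrow> 'b \<Rightarrow> 'l"
    and Z :: "'a \<Rightarrow> 'b \<Rightarrow> 'l"
  assumes "complete_residuated_lattice m r"
    and "I \<noteq> {}"
  shows "(\<exists>U. greatest_solution (WL21 m I V W Z) U)
       \<and> (\<exists>U. greatest_solution (WL22 m I V W Z) U)
       \<and> (\<exists>U. greatest_solution (WL23 m I V W Z) U)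
       \<and> (\<exists>U. greatest_solution (WL24 m I V W Z) U)
       \<and> (\<exists>U. greatest_solution (WL25 m I V W Z) U)
       \<and> (\<exists>U. greatest_solution (WL26 m I V W Z) U)
       \<and> (partial_fuzzy_function m r Z \<longrightarrow>
            (\<forall>U. greatest_solution (WL23 m I V W Z) U \<longrightarrow> partial_fuzzy_function m r U)
          \<and> (\<forall>U. greatest_solution (WL24 m I V W Z) U \<longrightarrow> partial_fuzzy_function m r U))"
proof -
  interpret crl m r using assms(1) by unfold_locales
  show ?thesis
  proof (intro conjI impI allI)
    show "\<exists>U. greatest_solution (WL21 m I V W Z) U" by (rule gs_exists) (rule c21)
    show "\<exists>U. greatest_solution (WL22 m I V W Z) U" by (rule gs_exists) (rule c22)
    show "\<exists>U. greatest_solution (WL23 m I V W Z) U" by (rule gs_exists) (rule c23)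
    show "\<exists>U. greatest_solution (WL24 m I V W Z) U" by (rule gs_exists) (rule c24)
    show "\<exists>U. greatest_solution (WL25 m I V W Z) U" by (rule gs_exists) (rule c25)
    show "\<exists>U. greatest_solution (WL26 m I V W Z) U" by (rule gs_exists) (rule c26)
  next
    fix U assume pZ: "partial_fuzzy_function m r Z" and g: "greatest_solution (WL23 m I V W Z) U"
    show "partial_fuzzy_function m r U"
      by (rule gs_pff[OF c23 g]) (use g pZ T23 in \<open>auto simp: greatest_solution_def\<close>)
  next
    fix U assume pZ: "partial_fuzzy_function m r Z" and g: "greatest_solution (WL24 m I V W Z) U"
    show "partial_fuzzy_function m r U"
      by (rule gs_pff[OF c24 g]) (use g pZ T24 in \<open>auto simp: greatest_solution_def\<close>)
  qed
qed

end
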